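(* Suppose $\mu>1$. Then for every environment $i\in S$ there exists $m\ge1$ such that the total state $m.i$ is viable.
   Context: Let $S$ be a finite set and $P$ the transition matrix of an irreducible Markov chain on $S$ with stationary distribution $\pi$. For each $i\in S$ let $(R_{in})_{n\in\mathbb{N}}$ be a probability distribution on $\mathbb{N}$ with mean $\mu_i\le\infty$, and $\mu=\sum_i\pi_i\mu_i$. Let $(\xi_t^i)_{t\ge1,i\in S}$ be independent with $\mathbb{P}(\xi_t^i=n)=R_{in}$, let $(Q_t)_{t\ge0}$ be a Markov chain with transition matrix $P$ independent of the $\xi$'s, and $\xi_t=\sum_{i}\xi_t^i\mathbf{1}\{Q_t=i\}$. The $\mathbb{Z}$-valued process is $Y_{t+1}=Y_t-1+\xi_{t+1}$; $\mathbb{P}_{m.i}$ is its law started from $Y_0=m$, $Q_0=i$. Let $\tau=\inf\{t\ge1:Q_t=i\}$. The total state $m.i$ is viable if $\mathbb{P}_{m.i}(Y_\tau-Y_0\ge1\text{ and }Y_t\ge1\text{ for all }t\in[0,\tau])>0$. *)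

theory Defs
  imports "HOL-Analysis.Analysis"
begin

definition stochastic_matrix :: "('a::finite \<Rightarrow> 'a \<Rightarrow> real) \<Rightarrow> bool" where
  "stochastic_matrix P \<longleftrightarrow> (\<forall>i j. P i j \<ge> 0) \<and> (\<forall>i. (\<Sum>j\<in>UNIV. P i j) = 1)"

definition irreducible_matrix :: "('a::finite \<Rightarrow> 'a \<Rightarrow> real) \<Rightarrow> bool" where
  "irreducible_matrix P \<longleftrightarrow> (\<forall>i j. (i, j) \<in> {(a, b). P a b > 0}\<^sup>+)"

definition stationary_distribution :: "('a::finite \<Rightarrow> 'a \<Rightarrow> real) \<Rightarrow> ('a \<Rightarrow> real) \<Rightarrow> bool" where
  "stationary_distribution P \<pi> \<longleftrightarrow> (\<forall>i. \<pi> i \<ge> 0) \<and> (\<Sum>i\<in>UNIV. \<pi> i) = 1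
     \<and> (\<forall>j. (\<Sum>i\<in>UNIV. \<pi> i * P i j) = \<pi> j)"

definition prob_dist_nat :: "(nat \<Rightarrow> real) \<Rightarrow> bool" where
  "prob_dist_nat r \<longleftrightarrow> (\<forall>n. r n \<ge> 0) \<and> r sums 1"

definition mean_nat :: "(nat \<Rightarrow> real) \<Rightarrow> ennreal" where
  "mean_nat r = (\<Sum>n. ennreal (real n * r n))"

text \<open>A finite trajectory after time 0 is a list xs whose (t-1)-th entry is (Q_t, xi_t), t = 1..length xs.
  Its probability, given Q_0 = q, is the product of P(Q_{t-1},Q_t) * R_{Q_t}(xi_t)
  (the xi_t^j are independent and independent of Q).\<close>
fun path_weight :: "('a \<Rightarrow> 'a \<Rightarrow> real) \<Rightarrow> ('a \<Rightarrow> nat \<Rightarrow> real) \<Rightarrow> 'a \<Rightarrow> ('a \<times> nat) list \<Rightarrow> real" where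
  "path_weight P R q [] = 1"
| "path_weight P R q ((s, n) # xs) = P q s * R s n * path_weight P R s xs"

definition walk :: "int \<Rightarrow> ('a \<times> nat) list \<Rightarrow> nat \<Rightarrow> int" where
  "walk m xs t = m + (\<Sum>s<t. int (snd (xs ! s)) - 1)"

text \<open>The trajectory up to the return time tau = length xs (first t>=1 with Q_t = i)
  realises the event {Y_tau - Y_0 >= 1 and Y_t >= 1 for all t in [0,tau]}.\<close>
definition viable_event :: "'a \<Rightarrow> int \<Rightarrow> ('a \<times> nat) list \<Rightarrow> bool" where
  "viable_event i m xs \<longleftrightarrow> xs \<noteq> [] \<and> fst (last xs) = i
     \<and> (\<forall>j < length xs - 1. fst (xs ! j) \<noteq> i)
     \<and> (\<forall>t \<le> length xs. walk m xs t \<ge> 1)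
     \<and> walk m xs (length xs) - walk m xs 0 \<ge> 1"

text \<open>P_{m.i}(Y_tau - Y_0 >= 1 and Y_t >= 1 for t in [0,tau]): the event is the disjoint
  union over the (countably many) trajectories up to tau realising it.\<close>
definition viable_prob :: "('a \<Rightarrow> 'a \<Rightarrow> real) \<Rightarrow> ('a \<Rightarrow> nat \<Rightarrow> real) \<Rightarrow> int \<Rightarrow> 'a \<Rightarrow> ennreal" where
  "viable_prob P R m i =
     (\<integral>\<^sup>+ xs. (if viable_event i m xs then ennreal (path_weight P R i xs) else 0) \<partial>count_space UNIV)"

definition viable :: "('a \<Rightarrow> 'a \<Rightarrow> real) \<Rightarrow> ('a \<Rightarrow> nat \<Rightarrow> real) \<Rightarrow> int \<Rightarrow> 'a \<Rightarrow> bool" where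
  "viable P R m i \<longleftrightarrow> viable_prob P R m i > 0"

end

theory Submission
  imports Defs
begin

fun pchain :: "('a \<Rightarrow> 'a \<Rightarrow> real) \<Rightarrow> 'a \<Rightarrow> 'a list \<Rightarrow> bool" where
  "pchain P q [] = True"
| "pchain P q (s # ss) = (P q s > 0 \<and> pchain P s ss)"

lemma pchain_append:
  "pchain P q (xs @ ys) = (pchain P q xs \<and> pchain P (last (q # xs)) ys)"
  by (induction xs arbitrary: q) auto

lemma path_to:
  assumes "(a, t) \<in> {(x, y). P x y > 0}\<^sup>+"
  shows "\<exists>tt. pchain P a tt \<and> tt \<noteq> [] \<and> last tt = t \<and> t \<notin> set (butlast tt)"
  using assms
proof (induction rule: converse_trancl_induct)
  case (base y)
  then show ?case by (intro exI[of _ "[t]"]) auto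
next
  case (step y z)
  then obtain tt where tt: "pchain P z tt" "tt \<noteq> []" "last tt = t" "t \<notin> set (butlast tt)" by blast
  show ?case
  proof (cases "z = t")
    case True
    then show ?thesis using step by (intro exI[of _ "[t]"]) auto
  next
    case False
    then show ?thesis using step tt by (intro exI[of _ "z # tt"]) auto
  qed
qed

lemma path_from:
  assumes "(a, t) \<in> {(x, y). P x y > 0}\<^sup>+"
  shows "\<exists>tt. pchain P a tt \<and> tt \<noteq> [] \<and> last tt = t \<and> a \<notin> set (butlast tt)"
  using assms
proof (induction rule: trancl_induct)
  case (base y)
  then show ?case by (intro exI[of _ "[y]"]) auto
next
  case (step y z)
  then obtain tt where tt: "pchain P a tt" "tt \<noteq> []" "last tt = y" "a \<notin> set (butlast tt)" by blast
  show ?case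
  proof (cases "y = a")
    case True
    then show ?thesis using step by (intro exI[of _ "[z]"]) auto
  next
    case False
    have "a \<notin> set tt" using tt False
      by (metis append_butlast_last_id in_set_conv_decomp rotate1.simps(2) set_rotate1 UnE empty_iff empty_set set_ConsD set_append)
    then show ?thesis using step tt False by (intro exI[of _ "tt @ [z]"]) (auto simp: pchain_append)
  qed
qed

lemma potential_argument:
  fixes P :: "'a::finite \<Rightarrow> 'a \<Rightarrow> real" and w :: "'a \<Rightarrow> int"
  assumes sto: "stochastic_matrix P"
    and irr: "irreducible_matrix P"
    and sta: "stationary_distribution P \<pi>"
    and pos: "(\<Sum>k\<in>UNIV. \<pi> k * of_int (w k)) > 0"
  shows "\<exists>ss. pchain P i ss \<and> ss \<noteq> [] \<and> last ss = i \<and> i \<notin> set (butlast ss) \<and> sum_list (map w ss) > 0"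
proof (rule ccontr)
  assume "\<not> ?thesis"
  then have H: "\<And>ss. pchain P i ss \<Longrightarrow> ss \<noteq> [] \<Longrightarrow> last ss = i \<Longrightarrow> i \<notin> set (butlast ss) \<Longrightarrow> sum_list (map w ss) \<le> 0"
    by force
  define A where "A k = {ss. pchain P i ss \<and> ss \<noteq> [] \<and> last ss = k \<and> i \<notin> set (butlast ss)}" for k
  define Wr where "Wr ss = real_of_int (sum_list (map w ss))" for ss
  define g where "g k = (if k = i then 0 else Sup (Wr ` A k))" for k
  have E: "\<And>a b. (a, b) \<in> {(x, y). P x y > 0}\<^sup>+" using irr unfolding irreducible_matrix_def by blast
  have Ane: "A k \<noteq> {}" for k
    using path_from[OF E[of i k]] unfolding A_def by blast
  have bdd: "bdd_above (Wr ` A k)" if "k \<noteq> i" for k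
  proof -
    obtain tt where tt: "pchain P k tt" "tt \<noteq> []" "last tt = i" "i \<notin> set (butlast tt)"
      using path_to[OF E[of k i]] by blast
    have "Wr ss \<le> - Wr tt" if "ss \<in> A k" for ss
    proof -
      have ss: "pchain P i ss" "ss \<noteq> []" "last ss = k" "i \<notin> set (butlast ss)"
        using that unfolding A_def by auto
      have "i \<notin> set ss" using ss \<open>k \<noteq> i\<close>
        by (metis append_butlast_last_id rotate1.simps(2) set_rotate1 set_ConsD set_append UnE)
      have "butlast (ss @ tt) = ss @ butlast tt" using tt(2) by (simp add: butlast_append)
      then have "sum_list (map w (ss @ tt)) \<le> 0"
        using H[of "ss @ tt"] ss tt \<open>i \<notin> set ss\<close> by (auto simp: pchain_append)
      then show ?thesis unfolding Wr_def by simp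
    qed
    then show ?thesis by (intro bdd_aboveI2) auto
  qed
  have claim: "g j + w k \<le> g k" if "P j k > 0" for j k
  proof (cases "k = i")
    case True
    show ?thesis
    proof (cases "j = i")
      case True
      then have "sum_list (map w [i]) \<le> 0" using H[of "[i]"] that \<open>k = i\<close> by auto
      then show ?thesis using True \<open>k = i\<close> unfolding g_def by simp
    next
      case False
      have "Wr ss \<le> - w k" if "ss \<in> A j" for ss
      proof -
        have ss: "pchain P i ss" "ss \<noteq> []" "last ss = j" "i \<notin> set (butlast ss)"
          using that unfolding A_def by auto
        have "i \<notin> set ss" using ss False
          by (metis append_butlast_last_id rotate1.simps(2) set_rotate1 set_ConsD set_append UnE)
        then have "sum_list (map w (ss @ [k])) \<le> 0"
          using H[of "ss @ [k]"] ss \<open>k = i\<close> \<open>P j k > 0\<close> by (auto simp: pchain_append)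
        then show ?thesis unfolding Wr_def by simp
      qed
      then have "Sup (Wr ` A j) \<le> - w k" using Ane[of j] by (intro cSup_least) auto
      then show ?thesis using False True unfolding g_def by simp
    qed
  next
    case False
    show ?thesis
    proof (cases "j = i")
      case True
      have "[k] \<in> A k" using that True unfolding A_def by auto
      then have "Wr [k] \<le> Sup (Wr ` A k)" using bdd[OF False] by (intro cSup_upper) auto
      then show ?thesis using True False unfolding g_def Wr_def by simp
    next
      case False2: False
      have "Wr ss + w k \<le> Sup (Wr ` A k)" if "ss \<in> A j" for ss
      proof -
        have ss: "pchain P i ss" "ss \<noteq> []" "last ss = j" "i \<notin> set (butlast ss)"
          using that unfolding A_def by auto
        have "i \<notin> set ss" using ss False2
          by (metis append_butlast_last_id rotate1.simps(2) set_rotate1 set_ConsD set_append UnE)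
        then have "ss @ [k] \<in> A k" using ss \<open>P j k > 0\<close> unfolding A_def
          by (auto simp: pchain_append)
        then have "Wr (ss @ [k]) \<le> Sup (Wr ` A k)" using bdd[OF False] by (intro cSup_upper) auto
        then show ?thesis unfolding Wr_def by simp
      qed
      then have "Sup (Wr ` A j) \<le> Sup (Wr ` A k) - w k" using Ane[of j]
        by (intro cSup_least) (auto simp: algebra_simps)
      then show ?thesis using False False2 unfolding g_def by simp
    qed
  qed
  have Pnn: "P j k \<ge> 0" for j k using sto unfolding stochastic_matrix_def by auto
  have Ps: "(\<Sum>k\<in>UNIV. P j k) = 1" for j using sto unfolding stochastic_matrix_def by auto
  have pinn: "\<pi> j \<ge> 0" for j using sta unfolding stationary_distribution_def by auto
  have pis: "(\<Sum>j\<in>UNIV. \<pi> j * P j k) = \<pi> k" for k using sta unfolding stationary_distribution_def by auto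
  have "(\<Sum>k\<in>UNIV. \<pi> k * g k) = (\<Sum>k\<in>UNIV. \<Sum>j\<in>UNIV. \<pi> j * P j k * g k)"
    by (simp add: pis sum_distrib_right[symmetric])
  also have "\<dots> = (\<Sum>j\<in>UNIV. \<Sum>k\<in>UNIV. \<pi> j * P j k * g k)" by (rule sum.swap)
  finally have e1: "(\<Sum>k\<in>UNIV. \<pi> k * g k) = (\<Sum>j\<in>UNIV. \<Sum>k\<in>UNIV. \<pi> j * P j k * g k)" .
  have ineq: "(\<Sum>j\<in>UNIV. \<Sum>k\<in>UNIV. \<pi> j * P j k * (g j + w k)) \<le> (\<Sum>j\<in>UNIV. \<Sum>k\<in>UNIV. \<pi> j * P j k * g k)"
  proof (intro sum_mono)
    fix j k
    show "\<pi> j * P j k * (g j + w k) \<le> \<pi> j * P j k * g k"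
    proof (cases "P j k > 0")
      case True
      then show ?thesis using claim[OF True] pinn[of j] by (intro mult_left_mono) auto
    next
      case False
      then have "P j k = 0" using Pnn[of j k] by linarith
      then show ?thesis by simp
    qed
  qed
  have "(\<Sum>j\<in>UNIV. \<Sum>k\<in>UNIV. \<pi> j * P j k * (g j + w k))
      = (\<Sum>j\<in>UNIV. \<Sum>k\<in>UNIV. \<pi> j * g j * P j k) + (\<Sum>j\<in>UNIV. \<Sum>k\<in>UNIV. \<pi> j * P j k * w k)"
    by (simp add: algebra_simps sum.distrib)
  also have "(\<Sum>j\<in>UNIV. \<Sum>k\<in>UNIV. \<pi> j * g j * P j k) = (\<Sum>j\<in>UNIV. \<pi> j * g j)"
    by (simp add: sum_distrib_left[symmetric] Ps)
  also have "(\<Sum>j\<in>UNIV. \<Sum>k\<in>UNIV. \<pi> j * P j k * w k) = (\<Sum>k\<in>UNIV. \<Sum>j\<in>UNIV. \<pi> j * P j k * w k)"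
    by (rule sum.swap)
  also have "\<dots> = (\<Sum>k\<in>UNIV. \<pi> k * w k)"
    by (simp add: pis sum_distrib_right[symmetric])
  finally have "(\<Sum>j\<in>UNIV. \<pi> j * g j) + (\<Sum>k\<in>UNIV. \<pi> k * w k) \<le> (\<Sum>k\<in>UNIV. \<pi> k * g k)"
    using ineq e1 by linarith
  then show False using pos by linarith
qed

lemma choose_n:
  fixes \<pi> :: "'a::finite \<Rightarrow> real" and R :: "'a \<Rightarrow> nat \<Rightarrow> real"
  assumes pd: "\<forall>k. prob_dist_nat (R k)"
    and pinn: "\<And>k. \<pi> k \<ge> 0"
    and mean: "(\<Sum>i\<in>UNIV. ennreal (\<pi> i) * mean_nat (R i)) > 1"
  shows "\<exists>n. (\<forall>k. R k (n k) > 0) \<and> (\<Sum>k\<in>UNIV. \<pi> k * real (n k)) > 1"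
proof -
  have Rnn: "R k m \<ge> 0" for k m using pd unfolding prob_dist_nat_def by auto
  have Rs: "R k sums 1" for k using pd unfolding prob_dist_nat_def by auto
  have supp: "\<exists>m. R k m > 0" for k
  proof (rule ccontr)
    assume "\<not> ?thesis"
    then have "R k = (\<lambda>_. 0)" using Rnn[of k] by (intro ext) (meson not_less order.antisym)
    then show False using Rs[of k] sums_unique2[OF sums_zero] by (metis zero_neq_one)
  qed
  define d where "d k = (SOME m. R k m > 0)" for k
  have d: "R k (d k) > 0" for k unfolding d_def using supp[of k] by (rule someI_ex)
  show ?thesis
  proof (cases "\<exists>k0. \<pi> k0 > 0 \<and> (\<forall>B. \<exists>m\<ge>B. R k0 m > 0)")
    case True
    then obtain k0 where k0: "\<pi> k0 > 0" "\<And>B. \<exists>m\<ge>B. R k0 m > 0" by blast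
    obtain N :: nat where N: "1 / \<pi> k0 < N" using reals_Archimedean2 by blast
    obtain m0 where m0: "m0 \<ge> N" "R k0 m0 > 0" using k0(2) by blast
    define n where "n k = (if k = k0 then m0 else d k)" for k
    have "1 < \<pi> k0 * N" using N k0(1) by (simp add: field_simps)
    also have "\<dots> \<le> \<pi> k0 * real (n k0)" using m0 k0(1) unfolding n_def by simp
    also have "\<dots> \<le> (\<Sum>k\<in>UNIV. \<pi> k * real (n k))"
      by (rule member_le_sum) (auto simp: pinn)
    finally have "1 < (\<Sum>k\<in>UNIV. \<pi> k * real (n k))" .
    moreover have "\<forall>k. R k (n k) > 0" using m0 d unfolding n_def by auto
    ultimately show ?thesis by blast
  next
    case False
    have bnd: "\<exists>B. \<forall>m. R k m > 0 \<longrightarrow> m < B" if pk0: "\<pi> k > 0" for k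
    proof -
      obtain B where "\<not> (\<exists>m\<ge>B. R k m > 0)" using False pk0 by blast
      then have "\<forall>m. R k m > 0 \<longrightarrow> m < B" using not_le by blast
      then show ?thesis by blast
    qed
    define n where "n k = (if \<pi> k > 0 then Max {m. R k m > 0} else d k)" for k
    have nprop: "R k (n k) > 0 \<and> (\<forall>m. R k m > 0 \<longrightarrow> m \<le> n k)" if pk: "\<pi> k > 0" for k
    proof -
      obtain B where B: "\<forall>m. R k m > 0 \<longrightarrow> m < B" using bnd[OF pk] by blast
      have sub: "{m. R k m > 0} \<subseteq> {..<B}" using B by blast
      have fin: "finite {m. R k m > 0}" using finite_subset[OF sub] by blast
      have ne: "{m. R k m > 0} \<noteq> {}" using d[of k] by auto
      show ?thesis using Max_in[OF fin ne] Max_ge[OF fin] pk unfolding n_def by auto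
    qed
    have npos: "R k (n k) > 0" for k using nprop d unfolding n_def by auto
    have meanle: "ennreal (\<pi> k) * mean_nat (R k) \<le> ennreal (\<pi> k * real (n k))" for k
    proof (cases "\<pi> k > 0")
      case False
      then have "\<pi> k = 0" using pinn[of k] by linarith
      then show ?thesis by simp
    next
      case True
      have "mean_nat (R k) \<le> (\<Sum>m. ennreal (real (n k)) * ennreal (R k m))"
        unfolding mean_nat_def
      proof (rule suminf_le)
        fix m
        show "ennreal (real m * R k m) \<le> ennreal (real (n k)) * ennreal (R k m)"
        proof (cases "R k m > 0")
          case True
          then have "m \<le> n k" using nprop[OF \<open>\<pi> k > 0\<close>] by auto
          then show ?thesis using True
            by (simp add: ennreal_mult'[symmetric] ennreal_leI mult_right_mono)
        next
          case False
          then have "R k m = 0" using Rnn[of k m] by linarith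
          then show ?thesis by simp
        qed
      qed (auto intro: summableI)
      also have "\<dots> = ennreal (real (n k)) * (\<Sum>m. ennreal (R k m))" by simp
      also have "(\<Sum>m. ennreal (R k m)) = ennreal (\<Sum>m. R k m)"
        by (rule suminf_ennreal2) (auto simp: Rnn sums_summable[OF Rs[of k]])
      also have "(\<Sum>m. R k m) = 1" using sums_unique[OF Rs[of k]] by simp
      finally have ml: "mean_nat (R k) \<le> ennreal (real (n k))" by simp
      have "ennreal (\<pi> k) * mean_nat (R k) \<le> ennreal (\<pi> k) * ennreal (real (n k))"
        using ml by (rule mult_left_mono) simp
      also have "\<dots> = ennreal (\<pi> k * real (n k))" using pinn[of k] by (simp add: ennreal_mult)
      finally show ?thesis .
    qed
    have "1 < (\<Sum>k\<in>UNIV. ennreal (\<pi> k) * mean_nat (R k))" by (rule mean)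
    also have "\<dots> \<le> (\<Sum>k\<in>UNIV. ennreal (\<pi> k * real (n k)))" by (intro sum_mono meanle)
    also have "\<dots> = ennreal (\<Sum>k\<in>UNIV. \<pi> k * real (n k))" using pinn by (intro sum_ennreal) auto
    finally have "ennreal 1 < ennreal (\<Sum>k\<in>UNIV. \<pi> k * real (n k))" by simp
    then have "1 < (\<Sum>k\<in>UNIV. \<pi> k * real (n k))" by (simp add: ennreal_less_iff)
    then show ?thesis using npos by blast
  qed
qed

lemma pw_pos:
  assumes "pchain P q ss" "\<forall>k. R k (n k) > 0"
  shows "path_weight P R q (map (\<lambda>s. (s, n s)) ss) > 0"
  using assms by (induction ss arbitrary: q) auto

lemma prob_pos:
  fixes f :: "'b \<Rightarrow> ennreal"
  assumes "f x0 > 0"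
  shows "(\<integral>\<^sup>+ x. f x \<partial>count_space UNIV) > 0"
proof -
  have "(\<integral>\<^sup>+ x. f x * indicator {x0} x \<partial>count_space UNIV) \<le> (\<integral>\<^sup>+ x. f x \<partial>count_space UNIV)"
    by (intro nn_integral_mono) (auto simp: indicator_def)
  moreover have "(\<integral>\<^sup>+ x. f x * indicator {x0} x \<partial>count_space UNIV) = f x0"
    by simp
  ultimately show ?thesis using assms by simp
qed

theorem mainTheorem4:
  fixes P :: "'a::finite \<Rightarrow> 'a \<Rightarrow> real"
    and \<pi> :: "'a \<Rightarrow> real"
    and R :: "'a \<Rightarrow> nat \<Rightarrow> real"
  assumes "stochastic_matrix P"
    and "irreducible_matrix P"
    and "stationary_distribution P \<pi>"
    and "\<forall>i. prob_dist_nat (R i)"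
    and "(\<Sum>i\<in>UNIV. ennreal (\<pi> i) * mean_nat (R i)) > 1"
  shows "\<forall>i. \<exists>m::int. m \<ge> 1 \<and> viable P R m i"
proof
  fix i
  have pinn: "\<pi> k \<ge> 0" for k using assms(3) unfolding stationary_distribution_def by auto
  have pis: "(\<Sum>k\<in>UNIV. \<pi> k) = 1" using assms(3) unfolding stationary_distribution_def by auto
  obtain n where npos: "\<forall>k. R k (n k) > 0" and nsum: "(\<Sum>k\<in>UNIV. \<pi> k * real (n k)) > 1"
    using choose_n[OF assms(4) pinn assms(5)] by blast
  define w where "w k = int (n k) - 1" for k
  have "(\<Sum>k\<in>UNIV. \<pi> k * of_int (w k)) = (\<Sum>k\<in>UNIV. \<pi> k * real (n k)) - (\<Sum>k\<in>UNIV. \<pi> k)"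
    unfolding w_def by (simp add: algebra_simps sum_subtractf)
  then have wpos: "(\<Sum>k\<in>UNIV. \<pi> k * of_int (w k)) > 0" using nsum pis by simp
  obtain ss where ss: "pchain P i ss" "ss \<noteq> []" "last ss = i" "i \<notin> set (butlast ss)"
    "sum_list (map w ss) > 0"
    using potential_argument[OF assms(1,2,3) wpos] by blast
  define xs where "xs = map (\<lambda>s. (s, n s)) ss"
  define m where "m = 1 + int (length ss)"
  have len: "length xs = length ss" unfolding xs_def by simp
  have wk: "walk m xs t = m + (\<Sum>s<t. w (ss ! s))" if "t \<le> length ss" for t
    unfolding walk_def xs_def w_def using that by (intro arg_cong[where f="\<lambda>x. m + x"] sum.cong) auto
  have ev: "viable_event i m xs"
    unfolding viable_event_def
  proof (intro conjI allI impI)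
    show "xs \<noteq> []" using ss(2) unfolding xs_def by simp
    show "fst (last xs) = i" using ss(2,3) unfolding xs_def by (simp add: last_map)
    fix j assume j: "j < length xs - 1"
    then have "ss ! j \<in> set (butlast ss)" using len
      by (metis length_butlast nth_butlast nth_mem)
    then show "fst (xs ! j) \<noteq> i" using ss(4) j len unfolding xs_def by auto
  next
    fix t assume t: "t \<le> length xs"
    have "(\<Sum>s<t. (-1::int)) \<le> (\<Sum>s<t. w (ss ! s))" by (intro sum_mono) (auto simp: w_def)
    then show "1 \<le> walk m xs t" using wk[of t] t len unfolding m_def by simp
  next
    have "(\<Sum>s<length ss. w (ss ! s)) = sum_list (map w ss)"
      by (simp add: sum_list_sum_nth atLeast0LessThan)
    then show "1 \<le> walk m xs (length xs) - walk m xs 0" using wk[of "length ss"] wk[of 0] len ss(5) by simp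
  qed
  have "viable_prob P R m i > 0"
    unfolding viable_prob_def
    by (rule prob_pos[of _ xs]) (use ev pw_pos[of P i ss R n, OF ss(1) npos] in \<open>simp add: xs_def\<close>)
  then show "\<exists>m::int. m \<ge> 1 \<and> viable P R m i" unfolding viable_def by (intro exI[of _ m]) (auto simp: m_def)
qed

end
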